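(* Let $\Theta\subset\mathbb{R}^d$ be open and bounded, $(X_{\mathcal D},\Pi_{\mathcal D},\nabla_{\mathcal D})$ a gradient discretisation with piecewise constant reconstruction as in the context, $C_{\mathcal D}>0$ a constant such that $\|\Pi_{\mathcal D}v\|\le C_{\mathcal D}\|\nabla_{\mathcal D}v\|$ for all $v\in X_{\mathcal D}$, and $\delta t>0$. Let $\varepsilon>0$, $L_\zeta>0$ and let $\zeta_\varepsilon:\mathbb{R}\to\mathbb{R}$ be Lipschitz with $\zeta_\varepsilon(0)=0$ and $\varepsilon\le\zeta_\varepsilon'\le L_\zeta$ a.e. (so $\zeta_\varepsilon$ is a bijection with inverse $\zeta_\varepsilon^{-1}$). Let $L\ge1/\varepsilon$ and let $r\in L^2(\Theta)$ be fixed (in the scheme, $r=\Pi_{\mathcal D}\zeta_\varepsilon^{-1}(v^{n-1}_\varepsilon)+f(\Pi_{\mathcal D}v_\varepsilon^{n-1})\Delta^nW$). Suppose $v_\varepsilon^n\in X_{\mathcal D}$ satisfies $$\langle\Pi_{\mathcal D}\zeta_\varepsilon^{-1}(v_\varepsilon^n),\Pi_{\mathcal D}\varphi\rangle+\delta t\langle\nabla_{\mathcal D}v^n_\varepsilon,\nabla_{\mathcal D}\varphi\rangle=\langle r,\Pi_{\mathcal D}\varphi\rangle\quad\forall\varphi\in X_{\mathcal D}.$$ Let $v_\varepsilon^{n,0}\in X_{\mathcal D}$ be arbitrary and, for $i\ge1$, let $v_\varepsilon^{n,i}\in X_{\mathcal D}$ solve $$L\langle\Pi_{\mathcal D}v_\varepsilon^{n,i},\Pi_{\mathcal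 D}\varphi\rangle+\delta t\langle\nabla_{\mathcal D}v_\varepsilon^{n,i},\nabla_{\mathcal D}\varphi\rangle=\langle L\,\Pi_{\mathcal D}v_\varepsilon^{n,i-1}-\Pi_{\mathcal D}\zeta_\varepsilon^{-1}(v_\varepsilon^{n,i-1}),\Pi_{\mathcal D}\varphi\rangle+\langle r,\Pi_{\mathcal D}\varphi\rangle\quad\forall\varphi\in X_{\mathcal D}.$$ Set $e^{n,i}:=v_\varepsilon^n-v_\varepsilon^{n,i}$ and $\|w\|_X^2:=\big(L+\tfrac{\delta t}{C_{\mathcal D}^2}\big)\|\Pi_{\mathcal D}w\|^2+\delta t\|\nabla_{\mathcal D}w\|^2$ for $w\in X_{\mathcal D}$. Then for all $i\ge1$, $$\|e^{n,i}\|_X\le\alpha\|e^{n,i-1}\|_X,\qquad \alpha:=\big(L-L_\zeta^{-1}\big)\Big[L\Big(L+\frac{\delta t}{C_{\mathcal D}^2}\Big)\Big]^{-1/2}<1,$$ and in particular $v^{n,i}_\varepsilon\to v_\varepsilon^n$ in $\|\cdot\|_X$.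
   Context: A gradient discretisation with piecewise constant reconstruction consists of: a finite-dimensional real vector space $X_{\mathcal D}$ with basis $(\mathbf e_j)_{j\in B}$ ($B$ finite); disjoint measurable subsets $(\Theta_j)_{j\in B}$ of $\Theta$ and $\Pi_{\mathcal D}v=\sum_{j\in B}v_j\mathbf 1_{\Theta_j}$ for $v=\sum_j v_j\mathbf e_j$; a linear map $\nabla_{\mathcal D}:X_{\mathcal D}\to L^2(\Theta)^d$ such that $\|\nabla_{\mathcal D}\cdot\|_{L^2}$ is a norm on $X_{\mathcal D}$. For $g:\mathbb{R}\to\mathbb{R}$ with $g(0)=0$ and $v\in X_{\mathcal D}$, $g(v):=(g(v_j))_{j\in B}$, so $\Pi_{\mathcal D}g(v)=g(\Pi_{\mathcal D}v)$. $\langle\cdot,\cdot\rangle$ and $\|\cdot\|$ denote the $L^2(\Theta)$ inner product and norm. *)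

theory Defs
  imports "HOL-Analysis.Analysis"
begin

definition L2inner :: "'a::euclidean_space set \<Rightarrow> ('a \<Rightarrow> real) \<Rightarrow> ('a \<Rightarrow> real) \<Rightarrow> real" where
  "L2inner \<Theta> f g = integral\<^sup>L (lebesgue_on \<Theta>) (\<lambda>x. f x * g x)"

definition L2norm :: "'a::euclidean_space set \<Rightarrow> ('a \<Rightarrow> real) \<Rightarrow> real" where
  "L2norm \<Theta> f = sqrt (L2inner \<Theta> f f)"

definition L2innerv :: "'a::euclidean_space set \<Rightarrow> ('a \<Rightarrow> 'a) \<Rightarrow> ('a \<Rightarrow> 'a) \<Rightarrow> real" where
  "L2innerv \<Theta> F G = integral\<^sup>L (lebesgue_on \<Theta>) (\<lambda>x. inner (F x) (G x))"

definition L2normv :: "'a::euclidean_space set \<Rightarrow> ('a \<Rightarrow> 'a) \<Rightarrow> real" where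
  "L2normv \<Theta> F = sqrt (L2innerv \<Theta> F F)"

text \<open>Piecewise constant reconstruction: X_D is 'b => real (coordinates in the basis indexed
  by the finite type 'b), Pi_D v = sum_j v_j 1_{Theta_j}.\<close>
definition PiD :: "('b::finite \<Rightarrow> 'a set) \<Rightarrow> ('b \<Rightarrow> real) \<Rightarrow> 'a \<Rightarrow> real" where
  "PiD \<Theta>s v = (\<lambda>x. \<Sum>j\<in>UNIV. v j * indicator (\<Theta>s j) x)"

definition pc_grad_disc :: "'a::euclidean_space set \<Rightarrow> ('b::finite \<Rightarrow> 'a set)
    \<Rightarrow> (('b \<Rightarrow> real) \<Rightarrow> 'a \<Rightarrow> 'a) \<Rightarrow> bool" where
  "pc_grad_disc \<Theta> \<Theta>s grad \<longleftrightarrow>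
     (\<forall>j. \<Theta>s j \<in> sets lebesgue \<and> \<Theta>s j \<subseteq> \<Theta>) \<and> disjoint_family \<Theta>s \<and>
     (\<forall>v. grad v \<in> borel_measurable (lebesgue_on \<Theta>) \<and>
          integrable (lebesgue_on \<Theta>) (\<lambda>x. (norm (grad v x))\<^sup>2)) \<and>
     (\<forall>a v w. AE x in lebesgue_on \<Theta>. grad (\<lambda>j. a * v j + w j) x = a *\<^sub>R grad v x + grad w x) \<and>
     (\<forall>v. L2normv \<Theta> (grad v) = 0 \<longrightarrow> (\<forall>j. v j = 0))"

definition normX :: "'a::euclidean_space set \<Rightarrow> ('b::finite \<Rightarrow> 'a set) \<Rightarrow> (('b \<Rightarrow> real) \<Rightarrow> 'a \<Rightarrow> 'a)
    \<Rightarrow> real \<Rightarrow> real \<Rightarrow> real \<Rightarrow> ('b \<Rightarrow> real) \<Rightarrow> real" where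
  "normX \<Theta> \<Theta>s grad L dt CD w =
     sqrt ((L + dt / CD\<^sup>2) * (L2norm \<Theta> (PiD \<Theta>s w))\<^sup>2 + dt * (L2normv \<Theta> (grad w))\<^sup>2)"

end

theory Submission
  imports Defs
begin

lemma lborel_null_negl:
  assumes "N \<in> sets lborel" "emeasure lborel N = 0"
  shows "negligible (N::real set)"
proof -
  have "N \<in> null_sets lborel" using assms by (simp add: null_setsI)
  thus ?thesis unfolding negligible_iff_null_sets using null_sets_completionI by blast
qed

lemma pos_deriv_mono_strict:
  fixes k :: "real \<Rightarrow> real"
  assumes lip: "C-lipschitz_on UNIV k"
    and N: "negligible N"
    and der: "\<And>x. x \<notin> N \<Longrightarrow> \<exists>D>0. (k has_real_derivative D) (at x)"
    and ab: "a \<le> b"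
  shows "k a \<le> k b"
proof (rule ccontr)
  assume "\<not> k a \<le> k b"
  hence kab: "k b < k a" by simp
  have cont: "continuous_on UNIV k" using lip lipschitz_on_continuous_on by blast
  have negim: "negligible (k ` N)"
  proof (rule negligible_locally_Lipschitz_image)
    show "DIM(real) \<le> DIM(real)" by simp
    show "negligible N" by fact
    fix x assume "x \<in> N"
    show "\<exists>T B. open T \<and> x \<in> T \<and> (\<forall>y\<in>N \<inter> T. norm (k y - k x) \<le> B * norm (y - x))"
      using lip by (intro exI[of _ UNIV] exI[of _ C]) (auto simp: lipschitz_on_def dist_norm)
  qed
  have "\<not> {k b<..<k a} \<subseteq> k ` N"
  proof
    assume "{k b<..<k a} \<subseteq> k ` N"
    hence "negligible {k b<..<k a}" using negim negligible_subset by blast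
    thus False using negligible_interval(2)[of "k b" "k a"] kab by (simp add: box_real)
  qed
  then obtain y where "y \<in> {k b<..<k a}" "y \<notin> k ` N" by (meson subsetI)
  hence y: "k b < y" "y < k a" "y \<notin> k ` N" by auto
  define S where "S = {a..b} \<inter> {t. y \<le> k t}"
  have "closed {t. y \<le> k t}"
    using cont by (intro closed_Collect_le) (auto intro: continuous_intros)
  hence "compact S" unfolding S_def by (intro compact_Int_closed) auto
  moreover have "S \<noteq> {}" using ab y unfolding S_def by auto
  ultimately obtain x where xS: "x \<in> S" and xmax: "\<forall>t\<in>S. t \<le> x"
    using compact_attains_sup by metis
  have xb: "x < b" using xS y unfolding S_def by (cases "x = b") auto
  have kx: "k x = y"
  proof (rule ccontr)
    assume "k x \<noteq> y"
    hence "k x > y" using xS unfolding S_def by auto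
    then obtain t where t: "x \<le> t" "t \<le> b" "k t = y"
      using IVT2'[of k b y x] y xb continuous_on_subset[OF cont subset_UNIV]
      by (meson less_imp_le)
    hence "t \<in> S" using xS unfolding S_def by auto
    hence "t \<le> x" using xmax by blast
    with t \<open>k x \<noteq> y\<close> show False by auto
  qed
  hence "x \<notin> N" using y by auto
  then obtain D where "D > 0" "(k has_real_derivative D) (at x)" using der by blast
  then obtain d where d: "d > 0" "\<And>h. h > 0 \<Longrightarrow> h < d \<Longrightarrow> k x < k (x + h)"
    using DERIV_pos_inc_right by blast
  define h where "h = min (d/2) (b - x)"
  have h: "h > 0" "h < d" using d xb unfolding h_def by auto
  hence "k x < k (x + h)" using d by blast
  moreover have "x + h \<in> {a..b}" using xS xb h unfolding S_def h_def by auto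
  ultimately have "x + h \<in> S" using kx unfolding S_def by auto
  hence "x + h \<le> x" using xmax by blast
  with h show False by simp
qed

lemma nonneg_deriv_mono:
  fixes k :: "real \<Rightarrow> real"
  assumes lip: "C-lipschitz_on UNIV k"
    and N: "negligible N"
    and der: "\<And>x. x \<notin> N \<Longrightarrow> \<exists>D\<ge>0. (k has_real_derivative D) (at x)"
    and ab: "a \<le> b"
  shows "k a \<le> k b"
proof -
  have "k a - k b \<le> \<delta> * (b - a)" if "\<delta> > 0" for \<delta>
  proof -
    have "(\<lambda>x. k x + \<delta> * x) a \<le> (\<lambda>x. k x + \<delta> * x) b"
    proof (rule pos_deriv_mono_strict[OF _ N _ ab])
      show "(C + \<delta>)-lipschitz_on UNIV (\<lambda>x. k x + \<delta> * x)"
      proof (rule lipschitz_on_add[OF lip])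
        show "\<delta>-lipschitz_on UNIV (\<lambda>x. \<delta> * x)"
          using that unfolding lipschitz_on_def dist_real_def
          by (auto simp: abs_mult right_diff_distrib[symmetric])
      qed
      fix x assume "x \<notin> N"
      then obtain D where "D \<ge> 0" "(k has_real_derivative D) (at x)" using der by blast
      hence "((\<lambda>x. k x + \<delta> * x) has_real_derivative (D + \<delta>)) (at x)"
        by (auto intro!: derivative_eq_intros)
      thus "\<exists>D>0. ((\<lambda>x. k x + \<delta> * x) has_real_derivative D) (at x)"
        using \<open>D \<ge> 0\<close> that by (intro exI[of _ "D + \<delta>"]) auto
    qed
    thus ?thesis by (simp add: algebra_simps)
  qed
  show ?thesis
  proof (cases "a = b")
    case False
    hence "b - a > 0" using ab by simp
    show ?thesis
    proof (rule ccontr)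
      assume "\<not> k a \<le> k b"
      hence "(k a - k b) / (2 * (b - a)) > 0" using \<open>b - a > 0\<close> by simp
      from \<open>\<And>\<delta>. \<delta> > 0 \<Longrightarrow> _\<close>[OF this]
      have "k a - k b \<le> (k a - k b) / (2 * (b - a)) * (b - a)" .
      also have "\<dots> = (k a - k b) / 2" using \<open>b - a > 0\<close> by (simp add: field_simps)
      finally show False using \<open>\<not> k a \<le> k b\<close> by simp
    qed
  qed simp
qed


lemma zeta_bounds:
  fixes \<zeta> :: "real \<Rightarrow> real"
  assumes lip: "K-lipschitz_on UNIV \<zeta>"
    and ae: "AE x in lborel. \<zeta> differentiable (at x) \<and> \<epsilon> \<le> deriv \<zeta> x \<and> deriv \<zeta> x \<le> L\<zeta>"
    and xy: "x \<le> y"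
  shows "\<epsilon> * (y - x) \<le> \<zeta> y - \<zeta> x \<and> \<zeta> y - \<zeta> x \<le> L\<zeta> * (y - x)"
proof -
  from ae obtain N where N: "{x \<in> space lborel. \<not> (\<zeta> differentiable (at x) \<and> \<epsilon> \<le> deriv \<zeta> x \<and> deriv \<zeta> x \<le> L\<zeta>)} \<subseteq> N"
    "emeasure lborel N = 0" "N \<in> sets lborel"
    by (elim AE_E) auto
  have negN: "negligible N" using N by (intro lborel_null_negl) auto
  have good: "(\<zeta> has_real_derivative deriv \<zeta> x) (at x) \<and> \<epsilon> \<le> deriv \<zeta> x \<and> deriv \<zeta> x \<le> L\<zeta>"
    if "x \<notin> N" for x
    using N(1) that DERIV_deriv_iff_real_differentiable by auto
  have K0: "K \<ge> 0" using lip lipschitz_on_nonneg by blast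
  have lin: "c-lipschitz_on UNIV (\<lambda>x::real. c * x)" if "c \<ge> 0" for c
    using that unfolding lipschitz_on_def dist_real_def
    by (auto simp: abs_mult right_diff_distrib[symmetric])
  have "(\<lambda>x. \<zeta> x - \<epsilon> * x) x \<le> (\<lambda>x. \<zeta> x - \<epsilon> * x) y"
  proof (rule nonneg_deriv_mono[OF _ negN _ xy])
    show "(K + \<bar>\<epsilon>\<bar>)-lipschitz_on UNIV (\<lambda>x. \<zeta> x - \<epsilon> * x)"
    proof (rule lipschitz_on_diff[OF lip])
      show "\<bar>\<epsilon>\<bar>-lipschitz_on UNIV (\<lambda>x. \<epsilon> * x)"
        unfolding lipschitz_on_def dist_real_def
        by (auto simp: abs_mult right_diff_distrib[symmetric])
    qed
    fix z assume "z \<notin> N"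
    hence g: "(\<zeta> has_real_derivative deriv \<zeta> z) (at z)" "\<epsilon> \<le> deriv \<zeta> z" using good by auto
    have "((\<lambda>x. \<zeta> x - \<epsilon> * x) has_real_derivative (deriv \<zeta> z - \<epsilon>)) (at z)"
      using g(1) by (auto intro!: derivative_eq_intros)
    thus "\<exists>D\<ge>0. ((\<lambda>x. \<zeta> x - \<epsilon> * x) has_real_derivative D) (at z)" using g(2)
      by (intro exI[of _ "deriv \<zeta> z - \<epsilon>"]) auto
  qed
  moreover have "(\<lambda>x. L\<zeta> * x - \<zeta> x) x \<le> (\<lambda>x. L\<zeta> * x - \<zeta> x) y"
  proof (rule nonneg_deriv_mono[OF _ negN _ xy])
    show "(\<bar>L\<zeta>\<bar> + K)-lipschitz_on UNIV (\<lambda>x. L\<zeta> * x - \<zeta> x)"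
    proof (rule lipschitz_on_diff[OF _ lip])
      show "\<bar>L\<zeta>\<bar>-lipschitz_on UNIV (\<lambda>x. L\<zeta> * x)"
        unfolding lipschitz_on_def dist_real_def
        by (auto simp: abs_mult right_diff_distrib[symmetric])
    qed
    fix z assume "z \<notin> N"
    hence g: "(\<zeta> has_real_derivative deriv \<zeta> z) (at z)" "deriv \<zeta> z \<le> L\<zeta>" using good by auto
    have "((\<lambda>x. L\<zeta> * x - \<zeta> x) has_real_derivative (L\<zeta> - deriv \<zeta> z)) (at z)"
      using g(1) by (auto intro!: derivative_eq_intros)
    thus "\<exists>D\<ge>0. ((\<lambda>x. L\<zeta> * x - \<zeta> x) has_real_derivative D) (at z)" using g(2)
      by (intro exI[of _ "L\<zeta> - deriv \<zeta> z"]) auto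
  qed
  ultimately show ?thesis by (simp add: algebra_simps)
qed

lemma zeta_bij:
  fixes \<zeta> :: "real \<Rightarrow> real"
  assumes lip: "K-lipschitz_on UNIV \<zeta>" and z0: "\<zeta> 0 = 0" and eps: "\<epsilon> > 0"
    and mono: "\<And>x y. x \<le> y \<Longrightarrow> \<epsilon> * (y - x) \<le> \<zeta> y - \<zeta> x"
  shows "bij \<zeta>"
proof (rule bijI)
  show "inj \<zeta>"
  proof (rule injI)
    fix x y assume "\<zeta> x = \<zeta> y"
    show "x = y"
    proof (rule ccontr)
      assume "x \<noteq> y"
      hence "x < y \<or> y < x" by linarith
      thus False
      proof
        assume "x < y"
        hence "\<epsilon> * (y - x) > 0" using eps by simp
        thus False using mono[of x y] \<open>x < y\<close> \<open>\<zeta> x = \<zeta> y\<close> by linarith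
      next
        assume "y < x"
        hence "\<epsilon> * (x - y) > 0" using eps by simp
        thus False using mono[of y x] \<open>y < x\<close> \<open>\<zeta> x = \<zeta> y\<close> by linarith
      qed
    qed
  qed
  show "surj \<zeta>"
  proof -
    have "c \<in> range \<zeta>" for c
    proof -
      define r where "r = \<bar>c\<bar> / \<epsilon>"
      have r: "r \<ge> 0" "\<epsilon> * r = \<bar>c\<bar>" using eps by (auto simp: r_def)
      have "\<zeta> r \<ge> c" using mono[of 0 r] r z0 by simp
      moreover have "\<zeta> (-r) \<le> c" using mono[of "-r" 0] r z0 by simp
      moreover have "continuous_on {-r..r} \<zeta>"
        using lipschitz_on_continuous_on[OF lip] continuous_on_subset by blast
      ultimately obtain x where "\<zeta> x = c"
        using IVT'[of \<zeta> "-r" c r] r by auto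
      thus ?thesis by (metis rangeI)
    qed
    thus ?thesis by auto
  qed
qed

lemma beta_bound:
  fixes \<zeta> :: "real \<Rightarrow> real"
  assumes bij: "bij \<zeta>" and eps: "\<epsilon> > 0" and Lz: "L\<zeta> > 0" and L: "L \<ge> 1 / \<epsilon>"
    and bnd: "\<And>x y. x \<le> y \<Longrightarrow> \<epsilon> * (y - x) \<le> \<zeta> y - \<zeta> x \<and> \<zeta> y - \<zeta> x \<le> L\<zeta> * (y - x)"
  shows "\<bar>L * (p - q) - (inv \<zeta> p - inv \<zeta> q)\<bar> \<le> (L - 1 / L\<zeta>) * \<bar>p - q\<bar>"
proof -
  have key: "\<bar>L * (\<zeta> y - \<zeta> x) - (y - x)\<bar> \<le> (L - 1 / L\<zeta>) * (\<zeta> y - \<zeta> x)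
     \<and> \<zeta> x \<le> \<zeta> y" if "x \<le> y" for x y
  proof -
    define d where "d = \<zeta> y - \<zeta> x"
    define t where "t = y - x"
    have t: "t \<ge> 0" and dt: "\<epsilon> * t \<le> d" "d \<le> L\<zeta> * t" using bnd[OF that] that
      by (auto simp: d_def t_def)
    have d0: "d \<ge> 0" using dt(1) t eps by (smt (verit) mult_nonneg_nonneg)
    have t1: "t \<le> d / \<epsilon>" using dt(1) eps by (simp add: field_simps)
    have t2: "d / L\<zeta> \<le> t" using dt(2) Lz by (simp add: field_simps)
    have "d / \<epsilon> \<le> L * d" using L d0 eps by (metis mult_right_mono divide_inverse inverse_eq_divide mult.commute)
    hence lo: "0 \<le> L * d - t" using t1 by linarith
    have "L * d - t \<le> L * d - d / L\<zeta>" using t2 by linarith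
    also have "\<dots> = (L - 1 / L\<zeta>) * d" by (simp add: algebra_simps)
    finally show ?thesis using lo d0 unfolding d_def t_def by auto
  qed
  have px: "p = \<zeta> (inv \<zeta> p)" and qy: "q = \<zeta> (inv \<zeta> q)"
    using bij by (simp_all add: bij_is_surj surj_f_inv_f)
  obtain x y where px: "p = \<zeta> x" and qy: "q = \<zeta> y"
    using px qy by blast
  have ix: "inv \<zeta> (\<zeta> x) = x" "inv \<zeta> (\<zeta> y) = y" using bij by (simp_all add: bij_is_inj inv_f_f)
  have e1: "L * (\<zeta> x - \<zeta> y) - (x - y) = -(L * (\<zeta> y - \<zeta> x) - (y - x))" by (simp add: algebra_simps)
  show ?thesis
  proof (cases "x \<le> y")
    case True
    have k: "\<bar>L * (\<zeta> y - \<zeta> x) - (y - x)\<bar> \<le> (L - 1 / L\<zeta>) * (\<zeta> y - \<zeta> x)" "\<zeta> x \<le> \<zeta> y"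
      using key[OF True] by auto
    have a1: "\<bar>\<zeta> x - \<zeta> y\<bar> = \<zeta> y - \<zeta> x" using k(2) by auto
    show ?thesis unfolding px qy ix e1 abs_minus_cancel a1 using k(1) by linarith
  next
    case False
    hence "y \<le> x" by simp
    from key[OF this] show ?thesis unfolding px qy ix by (simp add: abs_if)
  qed
qed

lemma PiD_at:
  assumes "disjoint_family \<Theta>s" "x \<in> \<Theta>s j0"
  shows "PiD \<Theta>s u x = u j0"
proof -
  have "PiD \<Theta>s u x = (\<Sum>j\<in>UNIV. if j = j0 then u j0 else 0)"
    unfolding PiD_def
  proof (rule sum.cong[OF refl])
    fix j
    show "u j * indicator (\<Theta>s j) x = (if j = j0 then u j0 else 0)"
    proof (cases "j = j0")
      case False
      hence "\<Theta>s j \<inter> \<Theta>s j0 = {}" using assms(1) unfolding disjoint_family_on_def by blast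
      hence "x \<notin> \<Theta>s j" using assms(2) by blast
      thus ?thesis using False by simp
    qed (use assms in simp)
  qed
  thus ?thesis by simp
qed

lemma PiD_out:
  assumes "\<And>j. x \<notin> \<Theta>s j"
  shows "PiD \<Theta>s u x = 0"
  unfolding PiD_def using assms by simp

lemma PiD_mult:
  assumes "disjoint_family \<Theta>s"
  shows "PiD \<Theta>s u x * PiD \<Theta>s w x = PiD \<Theta>s (\<lambda>j. u j * w j) x"
proof (cases "\<exists>j. x \<in> \<Theta>s j")
  case True
  then obtain j where "x \<in> \<Theta>s j" by blast
  thus ?thesis using PiD_at[OF assms] by simp
next
  case False
  thus ?thesis using PiD_out[of x \<Theta>s] by simp
qed

lemma PiD_affine:
  "(\<lambda>x. a * PiD \<Theta>s u x - PiD \<Theta>s w x) = PiD \<Theta>s (\<lambda>j. a * u j - w j)"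
proof
  fix x
  have "a * (\<Sum>j\<in>UNIV. u j * indicator (\<Theta>s j) x) - (\<Sum>j\<in>UNIV. w j * indicator (\<Theta>s j) x)
     = (\<Sum>j\<in>UNIV. a * (u j * indicator (\<Theta>s j) x) - w j * indicator (\<Theta>s j) x)"
    by (simp only: sum_distrib_left sum_subtractf)
  also have "\<dots> = (\<Sum>j\<in>UNIV. (a * u j - w j) * indicator (\<Theta>s j) x)"
    by (rule sum.cong[OF refl]) (simp only: left_diff_distrib mult.assoc)
  finally show "a * PiD \<Theta>s u x - PiD \<Theta>s w x = PiD \<Theta>s (\<lambda>j. a * u j - w j) x"
    unfolding PiD_def .
qed

lemma int_PiD:
  assumes cells: "\<And>j. \<Theta>s j \<in> sets lebesgue \<and> \<Theta>s j \<subseteq> \<Theta>"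
    and TL: "\<Theta> \<in> sets lebesgue" and fin: "emeasure lebesgue \<Theta> < \<infinity>"
  shows "integral\<^sup>L (lebesgue_on \<Theta>) (PiD \<Theta>s c) = (\<Sum>j\<in>UNIV. c j * measure (lebesgue_on \<Theta>) (\<Theta>s j))"
proof -
  have int: "integrable (lebesgue_on \<Theta>) (\<lambda>x. c j * indicator (\<Theta>s j) x)" for j
  proof -
    have s: "\<Theta>s j \<in> sets (lebesgue_on \<Theta>)" using cells[of j] TL by (simp add: sets_restrict_space_iff)
    have "emeasure (lebesgue_on \<Theta>) (\<Theta>s j) = emeasure lebesgue (\<Theta>s j)"
      using cells[of j] TL by (simp add: emeasure_restrict_space)
    also have "\<dots> \<le> emeasure lebesgue \<Theta>" using cells[of j] TL by (metis emeasure_mono)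
    finally have "emeasure (lebesgue_on \<Theta>) (\<Theta>s j) < \<infinity>" using fin by (simp add: le_less_trans)
    thus ?thesis using s by (intro integrable_mult_right integrable_real_indicator)
  qed
  have sp: "\<Theta>s j \<inter> space (lebesgue_on \<Theta>) = \<Theta>s j" for j using cells[of j] by auto
  have ii: "integral\<^sup>L (lebesgue_on \<Theta>) (indicator (\<Theta>s j)) = measure (lebesgue_on \<Theta>) (\<Theta>s j)" for j
    by (metis Bochner_Integration.integral_indicator sp)
  show ?thesis unfolding PiD_def
    by (subst Bochner_Integration.integral_sum[OF int]) (simp only: integral_mult_right_zero ii)
qed

lemma L2inner_PiD:
  assumes "disjoint_family \<Theta>s" and cells: "\<And>j. \<Theta>s j \<in> sets lebesgue \<and> \<Theta>s j \<subseteq> \<Theta>"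
    and TL: "\<Theta> \<in> sets lebesgue" and fin: "emeasure lebesgue \<Theta> < \<infinity>"
  shows "L2inner \<Theta> (PiD \<Theta>s u) (PiD \<Theta>s w) = (\<Sum>j\<in>UNIV. u j * w j * measure (lebesgue_on \<Theta>) (\<Theta>s j))"
  unfolding L2inner_def PiD_mult[OF assms(1)]
  by (subst int_PiD[OF cells TL fin]) simp

lemma grad_int:
  assumes gd: "pc_grad_disc \<Theta> \<Theta>s grad"
  shows "integrable (lebesgue_on \<Theta>) (\<lambda>x. inner (grad u x) (grad w x))"
proof (rule Bochner_Integration.integrable_bound)
  show "integrable (lebesgue_on \<Theta>) (\<lambda>x. (norm (grad u x))\<^sup>2 + (norm (grad w x))\<^sup>2)"
    using gd unfolding pc_grad_disc_def by (intro Bochner_Integration.integrable_add) auto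
  show "(\<lambda>x. inner (grad u x) (grad w x)) \<in> borel_measurable (lebesgue_on \<Theta>)"
    using gd unfolding pc_grad_disc_def by (intro borel_measurable_inner) auto
  show "AE x in lebesgue_on \<Theta>. norm (inner (grad u x) (grad w x))
          \<le> norm ((norm (grad u x))\<^sup>2 + (norm (grad w x))\<^sup>2)"
  proof (rule AE_I2)
    fix x
    define a where "a = norm (grad u x)"
    define b where "b = norm (grad w x)"
    have "\<bar>inner (grad u x) (grad w x)\<bar> \<le> a * b" unfolding a_def b_def by (rule Cauchy_Schwarz_ineq2)
    moreover have "a * b \<le> a\<^sup>2 + b\<^sup>2"
    proof -
      have "0 \<le> (a - b)\<^sup>2" by simp
      hence "2 * (a * b) \<le> a * a + b * b" by (simp add: power2_eq_square algebra_simps)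
      moreover have "a \<ge> 0" "b \<ge> 0" unfolding a_def b_def by auto
      moreover have "0 \<le> a * b" using calculation(2,3) by simp
      ultimately show ?thesis unfolding power2_eq_square by linarith
    qed
    ultimately show "norm (inner (grad u x) (grad w x)) \<le> norm ((norm (grad u x))\<^sup>2 + (norm (grad w x))\<^sup>2)"
      unfolding a_def b_def by simp
  qed
qed

lemma grad_diff_inner:
  assumes gd: "pc_grad_disc \<Theta> \<Theta>s grad"
  shows "L2innerv \<Theta> (grad (\<lambda>j. p j - q j)) (grad w) = L2innerv \<Theta> (grad p) (grad w) - L2innerv \<Theta> (grad q) (grad w)"
proof -
  have eqf: "(\<lambda>j. (-1) * q j + p j) = (\<lambda>j. p j - q j)" by auto
  have "AE x in lebesgue_on \<Theta>. grad (\<lambda>j. (-1) * q j + p j) x = (-1) *\<^sub>R grad q x + grad p x"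
    using gd unfolding pc_grad_disc_def by blast
  hence ae: "AE x in lebesgue_on \<Theta>. inner (grad (\<lambda>j. p j - q j) x) (grad w x) = inner (grad p x - grad q x) (grad w x)"
    unfolding eqf by eventually_elim simp
  have meas: "grad u \<in> borel_measurable (lebesgue_on \<Theta>)" for u using gd unfolding pc_grad_disc_def by blast
  have "L2innerv \<Theta> (grad (\<lambda>j. p j - q j)) (grad w) = integral\<^sup>L (lebesgue_on \<Theta>) (\<lambda>x. inner (grad p x - grad q x) (grad w x))"
    unfolding L2innerv_def
    by (rule integral_cong_AE[OF _ _ ae]) (intro borel_measurable_inner borel_measurable_diff meas)+
  also have "\<dots> = integral\<^sup>L (lebesgue_on \<Theta>) (\<lambda>x. inner (grad p x) (grad w x) - inner (grad q x) (grad w x))"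
    by (simp add: inner_diff_left)
  also have "\<dots> = L2innerv \<Theta> (grad p) (grad w) - L2innerv \<Theta> (grad q) (grad w)"
    unfolding L2innerv_def by (rule Bochner_Integration.integral_diff) (rule grad_int[OF gd])+
  finally show ?thesis .
qed

lemma L2innerv_nonneg: "L2innerv \<Theta> F F \<ge> 0"
  unfolding L2innerv_def by (rule Bochner_Integration.integral_nonneg) simp

lemma scalar_step:
  fixes L s dt M A A' B B' :: real
  assumes L: "L > 0" and s: "s > 0" and dt: "dt \<ge> 0" and M: "M \<ge> 0"
    and A: "A \<ge> 0" and A': "A' \<ge> 0" and B: "B \<ge> 0" and B': "B' \<ge> 0"
    and P: "s * A \<le> dt * B" and E: "L * A + dt * B \<le> M * sqrt A' * sqrt A"
  shows "sqrt ((L + s) * A + dt * B) \<le> M / sqrt (L * (L + s)) * sqrt ((L + s) * A' + dt * B')"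
proof -
  define a where "a = sqrt A"
  define a' where "a' = sqrt A'"
  have a: "a \<ge> 0" "A = a * a" unfolding a_def using A by (auto simp: real_sqrt_mult_self)
  have a': "a' \<ge> 0" "A' = a' * a'" unfolding a'_def using A' by (auto simp: real_sqrt_mult_self)
  define t where "t = M * a'"
  have t: "t \<ge> 0" unfolding t_def using M a' by simp
  have E': "L * A + dt * B \<le> t * a" using E unfolding t_def a_def a'_def .
  have h1: "(L + s) * a * a \<le> t * a" using E' P a(2) by (simp add: algebra_simps)
  have h2: "(L + s) * a \<le> t"
  proof (cases "a = 0")
    case True thus ?thesis using t by simp
  next
    case False
    hence "a > 0" using a by simp
    thus ?thesis using h1 by (meson mult_right_le_imp_le)
  qed
  have h3: "(L + s) * A + dt * B \<le> t * a + s * (a * a)" using E' a(2) by (simp add: algebra_simps)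
  define d where "d = t - (L + s) * a"
  have d: "d \<ge> 0" using h2 unfolding d_def by simp
  have iden: "t * t - L * (t * a + s * (a * a)) = s * s * (a * a) + a * d * (L + 2 * s) + d * d"
    unfolding d_def by (simp add: algebra_simps)
  have "0 \<le> s * s * (a * a) + a * d * (L + 2 * s) + d * d"
    using a d s L by (intro add_nonneg_nonneg mult_nonneg_nonneg) auto
  hence h4: "L * (t * a + s * (a * a)) \<le> t * t" using iden by linarith
  have h5: "(L + s) * A + dt * B \<le> t * t / L"
  proof -
    have "t * a + s * (a * a) \<le> t * t / L" using h4 L by (simp add: field_simps)
    thus ?thesis using h3 by linarith
  qed
  have h6: "t * t / L \<le> M\<^sup>2 / (L * (L + s)) * ((L + s) * A' + dt * B')"
  proof -
    have "t * t / L = M\<^sup>2 / (L * (L + s)) * ((L + s) * A')"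
    proof -
      have nz: "L + s \<noteq> 0" "L \<noteq> 0" using L s by auto
      have "M\<^sup>2 / (L * (L + s)) * ((L + s) * A') = M\<^sup>2 * A' / L"
        using nz by (simp add: divide_simps)
      thus ?thesis unfolding t_def a'(2) by (simp add: power2_eq_square algebra_simps)
    qed
    also have "\<dots> \<le> M\<^sup>2 / (L * (L + s)) * ((L + s) * A' + dt * B')"
      using L s dt B' by (intro mult_left_mono) auto
    finally show ?thesis .
  qed
  have "sqrt ((L + s) * A + dt * B) \<le> sqrt (M\<^sup>2 / (L * (L + s)) * ((L + s) * A' + dt * B'))"
    using h5 h6 by (intro real_sqrt_le_mono) linarith
  also have "\<dots> = M / sqrt (L * (L + s)) * sqrt ((L + s) * A' + dt * B')"
    using M by (simp add: real_sqrt_mult real_sqrt_divide)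
  finally show ?thesis .
qed

theorem mainTheorem3:
  fixes \<Theta> :: "'a::euclidean_space set"
    and \<Theta>s :: "'b::finite \<Rightarrow> 'a set"
    and grad :: "('b \<Rightarrow> real) \<Rightarrow> 'a \<Rightarrow> 'a"
    and CD dt \<epsilon> L\<zeta> L K :: real
    and \<zeta> :: "real \<Rightarrow> real" and rr :: "'a \<Rightarrow> real"
    and v :: "'b \<Rightarrow> real" and vi :: "nat \<Rightarrow> 'b \<Rightarrow> real"
  assumes "open \<Theta>" and "bounded \<Theta>"
    and gd: "pc_grad_disc \<Theta> \<Theta>s grad"
    and "CD > 0" and poinc: "\<And>w. L2norm \<Theta> (PiD \<Theta>s w) \<le> CD * L2normv \<Theta> (grad w)"
    and "dt > 0"
    and "\<epsilon> > 0" and "L\<zeta> > 0"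
    and "K-lipschitz_on UNIV \<zeta>" and "\<zeta> 0 = 0"
    and "AE x in lborel. \<zeta> differentiable (at x) \<and> \<epsilon> \<le> deriv \<zeta> x \<and> deriv \<zeta> x \<le> L\<zeta>"
    and "L \<ge> 1 / \<epsilon>"
    and "rr \<in> borel_measurable (lebesgue_on \<Theta>)" and "integrable (lebesgue_on \<Theta>) (\<lambda>x. (rr x)\<^sup>2)"
    and eqv: "\<And>\<phi>. L2inner \<Theta> (PiD \<Theta>s (\<lambda>j. inv \<zeta> (v j))) (PiD \<Theta>s \<phi>)
                 + dt * L2innerv \<Theta> (grad v) (grad \<phi>) = L2inner \<Theta> rr (PiD \<Theta>s \<phi>)"
    and eqi: "\<And>i \<phi>. i \<ge> 1 \<Longrightarrow>
        L * L2inner \<Theta> (PiD \<Theta>s (vi i)) (PiD \<Theta>s \<phi>) + dt * L2innerv \<Theta> (grad (vi i)) (grad \<phi>)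
        = L2inner \<Theta> (\<lambda>x. L * PiD \<Theta>s (vi (i - 1)) x - PiD \<Theta>s (\<lambda>j. inv \<zeta> (vi (i - 1) j)) x) (PiD \<Theta>s \<phi>)
          + L2inner \<Theta> rr (PiD \<Theta>s \<phi>)"
  shows "(let \<alpha> = (L - 1 / L\<zeta>) / sqrt (L * (L + dt / CD\<^sup>2)) in
           \<alpha> < 1 \<and>
           (\<forall>i\<ge>1. normX \<Theta> \<Theta>s grad L dt CD (\<lambda>j. v j - vi i j)
                    \<le> \<alpha> * normX \<Theta> \<Theta>s grad L dt CD (\<lambda>j. v j - vi (i - 1) j)) \<and>
           ((\<lambda>i. normX \<Theta> \<Theta>s grad L dt CD (\<lambda>j. v j - vi i j)) \<longlonglongrightarrow> 0))"
proof -
  from gd have disj: "disjoint_family \<Theta>s" and cells: "\<And>j. \<Theta>s j \<in> sets lebesgue \<and> \<Theta>s j \<subseteq> \<Theta>"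
    unfolding pc_grad_disc_def by auto
  have TL: "\<Theta> \<in> sets lebesgue" using \<open>open \<Theta>\<close> by (simp add: borel_open)
  have fin: "emeasure lebesgue \<Theta> < \<infinity>"
    using bounded_set_imp_lmeasurable[OF \<open>bounded \<Theta>\<close> TL] unfolding fmeasurable_def by blast
  define m where "m j = measure (lebesgue_on \<Theta>) (\<Theta>s j)" for j
  have m0: "m j \<ge> 0" for j by (simp add: m_def)
  have IP: "L2inner \<Theta> (PiD \<Theta>s u) (PiD \<Theta>s w) = (\<Sum>j\<in>UNIV. u j * w j * m j)" for u w
    unfolding m_def by (rule L2inner_PiD[OF disj cells TL fin])
  have zb: "\<And>x y. x \<le> y \<Longrightarrow> \<epsilon> * (y - x) \<le> \<zeta> y - \<zeta> x \<and> \<zeta> y - \<zeta> x \<le> L\<zeta> * (y - x)"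
    using zeta_bounds[OF assms(9) assms(11)] by blast
  have epsLz: "\<epsilon> \<le> L\<zeta>" using zb[of 0 1] by simp
  have bij: "bij \<zeta>" using zeta_bij[OF assms(9) assms(10) assms(7)] zb by blast
  have bb: "\<And>p q. \<bar>L * (p - q) - (inv \<zeta> p - inv \<zeta> q)\<bar> \<le> (L - 1 / L\<zeta>) * \<bar>p - q\<bar>"
    using beta_bound[OF bij assms(7) assms(8) assms(12)] zb by blast
  have Lpos: "L > 0" using assms(7) assms(12) by (smt (verit) divide_pos_pos)
  have "1 / L\<zeta> \<le> 1 / \<epsilon>" using epsLz assms(7) by (simp add: frac_le)
  hence M0: "L - 1 / L\<zeta> \<ge> 0" using assms(12) by linarith
  have Mlt: "L - 1 / L\<zeta> < L" using assms(8) by simp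
  define s where "s = dt / CD\<^sup>2"
  have spos: "s > 0" unfolding s_def using assms(4) assms(6) by simp
  define \<alpha> where "\<alpha> = (L - 1 / L\<zeta>) / sqrt (L * (L + dt / CD\<^sup>2))"
  have Sge: "sqrt (L * (L + dt / CD\<^sup>2)) \<ge> L"
  proof -
    have "L * L \<le> L * (L + dt / CD\<^sup>2)" using Lpos spos unfolding s_def by simp
    hence "sqrt (L * L) \<le> sqrt (L * (L + dt / CD\<^sup>2))" by (rule real_sqrt_le_mono)
    thus ?thesis using Lpos by (simp add: real_sqrt_mult_self)
  qed
  have \<alpha>0: "\<alpha> \<ge> 0" unfolding \<alpha>_def using M0 Sge Lpos by (smt (verit) divide_nonneg_nonneg)
  have \<alpha>1: "\<alpha> < 1"
  proof -
    have Spos: "sqrt (L * (L + dt / CD\<^sup>2)) > 0" using Sge Lpos by linarith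
    have "L - 1 / L\<zeta> < 1 * sqrt (L * (L + dt / CD\<^sup>2))" using Sge Mlt by linarith
    thus ?thesis unfolding \<alpha>_def using pos_divide_less_eq[OF Spos] by blast
  qed
  define E where "E i = normX \<Theta> \<Theta>s grad L dt CD (\<lambda>j. v j - vi i j)" for i
  have E0: "E i \<ge> 0" for i
  proof -
    have "dt / CD\<^sup>2 > 0" using spos unfolding s_def .
    thus ?thesis unfolding E_def normX_def using Lpos assms(6)
      by (intro real_sqrt_ge_zero add_nonneg_nonneg mult_nonneg_nonneg) auto
  qed
  have Eform: "E i = sqrt ((L + s) * (\<Sum>j\<in>UNIV. (v j - vi i j) * (v j - vi i j) * m j)
       + dt * L2innerv \<Theta> (grad (\<lambda>j. v j - vi i j)) (grad (\<lambda>j. v j - vi i j)))" for i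
  proof -
    have "(\<Sum>j\<in>UNIV. (v j - vi i j) * (v j - vi i j) * m j) \<ge> 0"
      by (intro sum_nonneg mult_nonneg_nonneg m0 zero_le_square)
    thus ?thesis unfolding E_def normX_def L2norm_def L2normv_def IP s_def
      using L2innerv_nonneg[of \<Theta> "grad (\<lambda>j. v j - vi i j)"] by simp
  qed
  have step: "E i \<le> \<alpha> * E (i - 1)" if i1: "i \<ge> 1" for i
  proof -
    define e where "e = (\<lambda>j. v j - vi i j)"
    define e' where "e' = (\<lambda>j. v j - vi (i - 1) j)"
    define A where "A = (\<Sum>j\<in>UNIV. e j * e j * m j)"
    define A' where "A' = (\<Sum>j\<in>UNIV. e' j * e' j * m j)"
    define B where "B = L2innerv \<Theta> (grad e) (grad e)"
    define B' where "B' = L2innerv \<Theta> (grad e') (grad e')"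
    have A0: "A \<ge> 0" unfolding A_def by (intro sum_nonneg mult_nonneg_nonneg m0 zero_le_square)
    have A'0: "A' \<ge> 0" unfolding A'_def by (intro sum_nonneg mult_nonneg_nonneg m0 zero_le_square)
    have B0: "B \<ge> 0" "B' \<ge> 0" unfolding B_def B'_def by (rule L2innerv_nonneg)+
    have Ei: "E i = sqrt ((L + s) * A + dt * B)"
      unfolding Eform A_def B_def e_def ..
    have Ei': "E (i - 1) = sqrt ((L + s) * A' + dt * B')"
      unfolding Eform A'_def B'_def e'_def ..
    have P: "s * A \<le> dt * B"
    proof -
      have "sqrt A \<le> CD * sqrt B"
        using poinc[of e] unfolding L2norm_def L2normv_def IP A_def B_def .
      hence "(sqrt A)\<^sup>2 \<le> (CD * sqrt B)\<^sup>2" using A0 by (intro power_mono) auto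
      hence "A \<le> CD\<^sup>2 * B" using A0 B0 by (simp add: power_mult_distrib)
      hence "s * A \<le> s * (CD\<^sup>2 * B)" using spos by (intro mult_left_mono) auto
      also have "\<dots> = dt * B" unfolding s_def using assms(4) by simp
      finally show ?thesis .
    qed
    define g where "g j = L * e' j - (inv \<zeta> (v j) - inv \<zeta> (vi (i - 1) j))" for j
    define R where "R = L2inner \<Theta> rr (PiD \<Theta>s e)"
    define Gv where "Gv = L2innerv \<Theta> (grad v) (grad e)"
    define Gvi where "Gvi = L2innerv \<Theta> (grad (vi i)) (grad e)"
    have eq1: "(\<Sum>j\<in>UNIV. inv \<zeta> (v j) * e j * m j) + dt * Gv = R"
      using eqv[of e] unfolding IP R_def Gv_def .
    have eq2: "L * (\<Sum>j\<in>UNIV. vi i j * e j * m j) + dt * Gvi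
        = (\<Sum>j\<in>UNIV. (L * vi (i - 1) j - inv \<zeta> (vi (i - 1) j)) * e j * m j) + R"
      using eqi[OF i1, of e] unfolding PiD_affine IP R_def Gvi_def .
    have eq3: "B = Gv - Gvi" unfolding B_def Gv_def Gvi_def e_def by (rule grad_diff_inner[OF gd])
    have sumid: "(\<Sum>j\<in>UNIV. g j * e j * m j) = L * A + L * (\<Sum>j\<in>UNIV. vi i j * e j * m j)
        - (\<Sum>j\<in>UNIV. (L * vi (i - 1) j - inv \<zeta> (vi (i - 1) j)) * e j * m j)
        - (\<Sum>j\<in>UNIV. inv \<zeta> (v j) * e j * m j)"
      unfolding A_def sum_distrib_left sum.distrib[symmetric] sum_subtractf[symmetric]
      by (rule sum.cong[OF refl]) (simp add: g_def e_def e'_def algebra_simps)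
    have energy: "L * A + dt * B = (\<Sum>j\<in>UNIV. g j * e j * m j)"
    proof -
      have "dt * B = dt * Gv - dt * Gvi" using eq3 by (simp add: right_diff_distrib)
      thus ?thesis using sumid eq1 eq2 by linarith
    qed
    define f where "f j = e' j * sqrt (m j)" for j
    define h where "h j = e j * sqrt (m j)" for j
    have sq: "\<And>c j. (c * sqrt (m j))\<^sup>2 = c * c * m j"
    proof -
      fix c j
      have "sqrt (m j) * sqrt (m j) = m j" using m0[of j] by (simp add: real_sqrt_mult_self)
      moreover have "(c * sqrt (m j))\<^sup>2 = c * c * (sqrt (m j) * sqrt (m j))"
        by (simp add: power2_eq_square algebra_simps)
      ultimately show "(c * sqrt (m j))\<^sup>2 = c * c * m j" by simp
    qed
    have "(\<Sum>j\<in>UNIV. g j * e j * m j) \<le> (\<Sum>j\<in>UNIV. (L - 1 / L\<zeta>) * (\<bar>f j\<bar> * \<bar>h j\<bar>))"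
    proof (rule sum_mono)
      fix j
      have "g j * e j * m j \<le> \<bar>g j\<bar> * \<bar>e j\<bar> * m j"
        using m0[of j] by (intro mult_right_mono) (auto simp: abs_mult[symmetric])
      also have "\<dots> \<le> ((L - 1 / L\<zeta>) * \<bar>e' j\<bar>) * \<bar>e j\<bar> * m j"
      proof -
        have "\<bar>g j\<bar> \<le> (L - 1 / L\<zeta>) * \<bar>e' j\<bar>"
          using bb[of "v j" "vi (i - 1) j"] unfolding g_def e'_def by simp
        thus ?thesis using m0[of j] by (intro mult_right_mono) auto
      qed
      also have "\<dots> = (L - 1 / L\<zeta>) * (\<bar>f j\<bar> * \<bar>h j\<bar>)"
        unfolding f_def h_def using m0[of j] by (simp add: abs_mult algebra_simps)
      finally show "g j * e j * m j \<le> (L - 1 / L\<zeta>) * (\<bar>f j\<bar> * \<bar>h j\<bar>)" .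
    qed
    also have "\<dots> = (L - 1 / L\<zeta>) * (\<Sum>j\<in>UNIV. \<bar>f j\<bar> * \<bar>h j\<bar>)" by (simp add: sum_distrib_left)
    also have "\<dots> \<le> (L - 1 / L\<zeta>) * (L2_set f UNIV * L2_set h UNIV)"
      using M0 by (intro mult_left_mono L2_set_mult_ineq) auto
    also have "L2_set f UNIV = sqrt A'"
      unfolding L2_set_def f_def A'_def sq ..
    also have "L2_set h UNIV = sqrt A"
      unfolding L2_set_def h_def A_def sq ..
    finally have Eb: "L * A + dt * B \<le> (L - 1 / L\<zeta>) * sqrt A' * sqrt A"
      using energy by (simp add: mult.assoc)
    have "sqrt ((L + s) * A + dt * B) \<le> (L - 1 / L\<zeta>) / sqrt (L * (L + s)) * sqrt ((L + s) * A' + dt * B')"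
      by (rule scalar_step[OF Lpos spos _ M0 A0 A'0 B0(1) B0(2) P Eb]) (use assms(6) in simp)
    thus ?thesis unfolding Ei Ei' \<alpha>_def s_def .
  qed
  have pow: "E i \<le> \<alpha> ^ i * E 0" for i
  proof (induction i)
    case (Suc n)
    have "E (Suc n) \<le> \<alpha> * E n" using step[of "Suc n"] by simp
    also have "\<dots> \<le> \<alpha> * (\<alpha> ^ n * E 0)" using Suc \<alpha>0 by (intro mult_left_mono) auto
    finally show ?case by simp
  qed simp
  have lim: "E \<longlonglongrightarrow> 0"
  proof (rule tendsto_sandwich[of "\<lambda>_. 0" _ _ "\<lambda>i. \<alpha> ^ i * E 0"])
    show "\<forall>\<^sub>F n in sequentially. 0 \<le> E n" using E0 by simp
    show "\<forall>\<^sub>F n in sequentially. E n \<le> \<alpha> ^ n * E 0" using pow by simp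
    show "(\<lambda>n. 0) \<longlonglongrightarrow> (0::real)" by simp
    have "(\<lambda>n. \<alpha> ^ n) \<longlonglongrightarrow> 0" using \<alpha>0 \<alpha>1 by (intro LIMSEQ_power_zero) simp
    thus "(\<lambda>n. \<alpha> ^ n * E 0) \<longlonglongrightarrow> 0" by (rule tendsto_mult_left_zero)
  qed
  have Elam: "(\<lambda>i. normX \<Theta> \<Theta>s grad L dt CD (\<lambda>j. v j - vi i j)) = E" by (simp add: E_def fun_eq_iff)
  show ?thesis unfolding Let_def \<alpha>_def[symmetric] Elam
    using \<alpha>1 step lim unfolding E_def by blast
qed

end
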